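(* There is a function $f\colon\mathbb{N}\times\mathbb{N}\to\mathbb{N}$ such that for every prime power $q$ and every positive integer $k$, every $\mathrm{GF}(q)$-representable matroid is $(f(q,k),k)$-weakly base orderable.
   Context: For a positive integer $k$, an ordered pair $(B_1,B_2)$ of bases has the $k$-exchange property if there exist pairwise disjoint nonempty $X_1,\dots,X_k\subseteq B_1\setminus B_2$ and pairwise disjoint nonempty $Y_1,\dots,Y_k\subseteq B_2\setminus B_1$ such that $(B_1\setminus\bigcup_{i\in Z}X_i)\cup\bigcup_{i\in Z}Y_i$ is a basis for every $Z\subseteq[k]$. A matroid is $(\alpha,k)$-weakly base orderable if every ordered pair $(B_1,B_2)$ of bases with $|B_1\setminus B_2|\ge\alpha$ has the $k$-exchange property. *)

theory Defs
  imports "HOL-Algebra.Ring" "HOL-Computational_Algebra.Primes"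
begin

definition matroid :: "'e set \<Rightarrow> ('e set \<Rightarrow> bool) \<Rightarrow> bool" where
  "matroid E indep \<longleftrightarrow> finite E
     \<and> (\<forall>X. indep X \<longrightarrow> X \<subseteq> E)
     \<and> indep {}
     \<and> (\<forall>X Y. indep Y \<and> X \<subseteq> Y \<longrightarrow> indep X)
     \<and> (\<forall>X Y. indep X \<and> indep Y \<and> card X < card Y \<longrightarrow> (\<exists>y\<in>Y - X. indep (insert y X)))"

definition basis :: "'e set \<Rightarrow> ('e set \<Rightarrow> bool) \<Rightarrow> 'e set \<Rightarrow> bool" where
  "basis E indep B \<longleftrightarrow> indep B \<and> (\<forall>X. indep X \<and> B \<subseteq> X \<longrightarrow> X = B)"

definition k_exchange :: "'e set \<Rightarrow> ('e set \<Rightarrow> bool) \<Rightarrow> nat \<Rightarrow> 'e set \<Rightarrow> 'e set \<Rightarrow> bool" where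
  "k_exchange E indep k B1 B2 \<longleftrightarrow>
     (\<exists>X Y :: nat \<Rightarrow> 'e set.
        (\<forall>i\<in>{1..k}. X i \<noteq> {} \<and> X i \<subseteq> B1 - B2 \<and> Y i \<noteq> {} \<and> Y i \<subseteq> B2 - B1)
      \<and> (\<forall>i\<in>{1..k}. \<forall>j\<in>{1..k}. i \<noteq> j \<longrightarrow> X i \<inter> X j = {} \<and> Y i \<inter> Y j = {})
      \<and> (\<forall>Z. Z \<subseteq> {1..k} \<longrightarrow>
             basis E indep ((B1 - (\<Union>i\<in>Z. X i)) \<union> (\<Union>i\<in>Z. Y i))))"

definition weakly_base_orderable :: "'e set \<Rightarrow> ('e set \<Rightarrow> bool) \<Rightarrow> nat \<Rightarrow> nat \<Rightarrow> bool" where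
  "weakly_base_orderable E indep \<alpha> k \<longleftrightarrow>
     (\<forall>B1 B2. basis E indep B1 \<and> basis E indep B2 \<and> card (B1 - B2) \<ge> \<alpha>
        \<longrightarrow> k_exchange E indep k B1 B2)"

text \<open>Columns v x (x in X), vectors in F^r given as functions on indices i < r,
  are linearly independent over the field F (as a family, so repeated columns are dependent).\<close>
definition lin_indep_cols :: "('a, 'b) ring_scheme \<Rightarrow> nat \<Rightarrow> ('e \<Rightarrow> nat \<Rightarrow> 'a) \<Rightarrow> 'e set \<Rightarrow> bool" where
  "lin_indep_cols F r v X \<longleftrightarrow>
     (\<forall>c. (\<forall>x\<in>X. c x \<in> carrier F)
          \<and> (\<forall>i<r. finsum F (\<lambda>x. c x \<otimes>\<^bsub>F\<^esub> v x i) X = \<zero>\<^bsub>F\<^esub>)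
          \<longrightarrow> (\<forall>x\<in>X. c x = \<zero>\<^bsub>F\<^esub>))"

definition representable_over :: "('a, 'b) ring_scheme \<Rightarrow> 'e set \<Rightarrow> ('e set \<Rightarrow> bool) \<Rightarrow> bool" where
  "representable_over F E indep \<longleftrightarrow>
     (\<exists>r v. (\<forall>x\<in>E. \<forall>i<r. v x i \<in> carrier F)
        \<and> (\<forall>X. indep X \<longleftrightarrow> X \<subseteq> E \<and> lin_indep_cols F r v X))"

end

theory Submission
  imports Defs "HOL-Algebra.Multiplicative_Group" "HOL-Library.Ramsey"
begin

lemma basis_card_eq:
  assumes M: "matroid E Ind" and b1: "basis E Ind B1" and b2: "basis E Ind B2"
  shows "card B1 = card B2"
proof -
  have fin: "finite B" if "Ind B" for B using M that unfolding matroid_def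
    by (meson finite_subset)
  have aug: "\<And>X Y. Ind X \<Longrightarrow> Ind Y \<Longrightarrow> card X < card Y \<Longrightarrow> \<exists>y\<in>Y - X. Ind (insert y X)"
    using M unfolding matroid_def by blast
  have *: "\<not> card B < card B'" if bb: "basis E Ind B" "basis E Ind B'" for B B'
  proof
    assume "card B < card B'"
    then obtain y where "y \<in> B' - B" "Ind (insert y B)"
      using aug[of B B'] bb unfolding basis_def by blast
    then show False using bb(1) unfolding basis_def by blast
  qed
  show ?thesis using *[OF b1 b2] *[OF b2 b1] by linarith
qed

lemma basis_of_card:
  assumes M: "matroid E Ind" and b: "basis E Ind B" and S: "Ind S" and c: "card S = card B"
  shows "basis E Ind S"
  unfolding basis_def
proof (intro conjI allI impI S)
  fix X assume X: "Ind X \<and> S \<subseteq> X"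
  have fin: "finite X" using M X unfolding matroid_def by (meson finite_subset)
  have aug: "\<And>X Y. Ind X \<Longrightarrow> Ind Y \<Longrightarrow> card X < card Y \<Longrightarrow> \<exists>y\<in>Y - X. Ind (insert y X)"
    using M unfolding matroid_def by blast
  show "X = S"
  proof (rule ccontr)
    assume "X \<noteq> S"
    then have "card S < card X" using X fin \<open>X \<noteq> S\<close> by (metis psubsetI psubset_card_mono)
    then obtain y where "y \<in> X - B" "Ind (insert y B)"
      using aug[of B X] b X c unfolding basis_def by auto
    then show False using b unfolding basis_def by blast
  qed
qed

context field begin

lemma minus_zero_iff:
  assumes "a \<in> carrier R" "b \<in> carrier R"
  shows "(a \<ominus> b = \<zero>) = (a = b)"
proof
  assume "a \<ominus> b = \<zero>"
  then have "a \<ominus> b \<oplus> b = \<zero> \<oplus> b" by simp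
  then show "a = b" using assms by algebra
next
  assume "a = b" then show "a \<ominus> b = \<zero>" using assms by algebra
qed

lemma finsum_neg:
  assumes "finite A" "f \<in> A \<rightarrow> carrier R"
  shows "(\<Oplus>x\<in>A. \<ominus> f x) = \<ominus> (\<Oplus>x\<in>A. f x)"
  using assms
proof (induction A rule: finite_induct)
  case empty then show ?case by simp
next
  case (insert a A)
  then have fa: "f a \<in> carrier R" and fA: "f \<in> A \<rightarrow> carrier R" by auto
  have c: "(\<lambda>x. \<ominus> f x) \<in> A \<rightarrow> carrier R" using fA by auto
  have "(\<Oplus>x\<in>insert a A. \<ominus> f x) = \<ominus> f a \<oplus> (\<Oplus>x\<in>A. \<ominus> f x)"
    using insert c fa by (subst finsum_insert) auto
  also have "\<dots> = \<ominus> f a \<oplus> \<ominus> (\<Oplus>x\<in>A. f x)" using insert fA by simp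
  also have "\<dots> = \<ominus> (f a \<oplus> (\<Oplus>x\<in>A. f x))"
    using fa fA by (simp add: minus_add)
  also have "\<dots> = \<ominus> (\<Oplus>x\<in>insert a A. f x)" using insert fa fA by simp
  finally show ?case .
qed

lemma finsum_diff:
  assumes "finite A" "f \<in> A \<rightarrow> carrier R" "g \<in> A \<rightarrow> carrier R"
  shows "(\<Oplus>x\<in>A. f x \<ominus> g x) = (\<Oplus>x\<in>A. f x) \<ominus> (\<Oplus>x\<in>A. g x)"
proof -
  have "(\<Oplus>x\<in>A. f x \<ominus> g x) = (\<Oplus>x\<in>A. f x \<oplus> \<ominus> g x)"
    using assms by (intro finsum_cong') (auto simp: minus_eq)
  also have "\<dots> = (\<Oplus>x\<in>A. f x) \<oplus> (\<Oplus>x\<in>A. \<ominus> g x)"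
    using assms by (intro finsum_addf) auto
  also have "\<dots> = (\<Oplus>x\<in>A. f x) \<ominus> (\<Oplus>x\<in>A. g x)"
    using assms by (simp add: finsum_neg minus_eq)
  finally show ?thesis .
qed

lemma finsum_point:
  assumes "finite A" "a \<in> A" "f \<in> A \<rightarrow> carrier R" "\<And>x. x \<in> A \<Longrightarrow> x \<noteq> a \<Longrightarrow> f x = \<zero>"
  shows "(\<Oplus>x\<in>A. f x) = f a"
proof -
  have "(\<Oplus>x\<in>A. f x) = (\<Oplus>x\<in>A. if a = x then f x else \<zero>)"
    using assms by (intro finsum_cong') auto
  also have "\<dots> = f a" using assms by (intro finsum_singleton) auto
  finally show ?thesis .
qed

lemma finsum_two:
  assumes "finite A" "a \<in> A" "b \<in> A" "a \<noteq> b" "f \<in> A \<rightarrow> carrier R"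
    "\<And>x. x \<in> A \<Longrightarrow> x \<noteq> a \<Longrightarrow> x \<noteq> b \<Longrightarrow> f x = \<zero>"
  shows "(\<Oplus>x\<in>A. f x) = f a \<oplus> f b"
proof -
  have fA: "\<And>x. x \<in> A \<Longrightarrow> f x \<in> carrier R" using assms by auto
  have "(\<Oplus>x\<in>A. f x) = (\<Oplus>x\<in>A. (if x = a then f x else \<zero>) \<oplus> (if x = b then f x else \<zero>))"
    using assms fA by (intro finsum_cong') auto
  also have "\<dots> = (\<Oplus>x\<in>A. (if x = a then f x else \<zero>)) \<oplus> (\<Oplus>x\<in>A. (if x = b then f x else \<zero>))"
    using assms by (intro finsum_addf) auto
  also have "\<dots> = f a \<oplus> f b"
  proof -
    have fa: "f a \<in> carrier R" "f b \<in> carrier R" using assms by auto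
    show ?thesis
      using assms fa by (subst finsum_point[of _ a], auto, subst finsum_point[of _ b], auto)
  qed
  finally show ?thesis .
qed

end

locale rep = field R for R :: "nat ring" (structure) +
  fixes E :: "nat set" and Ind :: "nat set \<Rightarrow> bool" and r :: nat and v :: "nat \<Rightarrow> nat \<Rightarrow> nat"
  assumes M: "matroid E Ind"
  and vc: "\<And>x i. x \<in> E \<Longrightarrow> i < r \<Longrightarrow> v x i \<in> carrier R"
  and ind: "\<And>X. Ind X \<longleftrightarrow> X \<subseteq> E \<and> lin_indep_cols R r v X"
begin

lemma finE: "finite E" using M unfolding matroid_def by blast

lemma indep_sub: "Ind X \<Longrightarrow> X \<subseteq> E" using ind by blast

lemma indep_fin: "Ind X \<Longrightarrow> finite X" using indep_sub finE finite_subset by blast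

lemma indepD:
  assumes "Ind X" "c \<in> X \<rightarrow> carrier R" "\<And>i. i < r \<Longrightarrow> (\<Oplus>x\<in>X. c x \<otimes> v x i) = \<zero>" "x \<in> X"
  shows "c x = \<zero>"
  using assms ind unfolding lin_indep_cols_def by blast

lemma uniq:
  assumes "Ind B" "\<alpha> \<in> B \<rightarrow> carrier R" "\<beta> \<in> B \<rightarrow> carrier R"
    "\<And>i. i < r \<Longrightarrow> (\<Oplus>x\<in>B. \<alpha> x \<otimes> v x i) = (\<Oplus>x\<in>B. \<beta> x \<otimes> v x i)" "x \<in> B"
  shows "\<alpha> x = \<beta> x"
proof -
  have fB: "finite B" using assms indep_fin by blast
  have sB: "B \<subseteq> E" using assms indep_sub by blast
  have "\<alpha> x \<ominus> \<beta> x = \<zero>"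
  proof (rule indepD[OF assms(1), of "\<lambda>x. \<alpha> x \<ominus> \<beta> x"])
    show "(\<lambda>x. \<alpha> x \<ominus> \<beta> x) \<in> B \<rightarrow> carrier R" using assms by auto
    fix i assume i: "i < r"
    have vB: "\<And>x. x \<in> B \<Longrightarrow> v x i \<in> carrier R" using sB vc i by blast
    have aB: "\<And>x. x \<in> B \<Longrightarrow> \<alpha> x \<in> carrier R" "\<And>x. x \<in> B \<Longrightarrow> \<beta> x \<in> carrier R" using assms by auto
    have "(\<Oplus>x\<in>B. (\<alpha> x \<ominus> \<beta> x) \<otimes> v x i) = (\<Oplus>x\<in>B. \<alpha> x \<otimes> v x i \<ominus> \<beta> x \<otimes> v x i)"
      using vB aB by (intro finsum_cong') (auto simp: l_minus minus_eq l_distr)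
    also have "\<dots> = \<zero>"
    proof -
      have cl: "(\<Oplus>x\<in>B. \<beta> x \<otimes> v x i) \<in> carrier R" using vB aB by (intro finsum_closed) auto
      show ?thesis using assms(4)[OF i] vB aB fB cl
        by (subst finsum_diff) (auto simp: minus_zero_iff)
    qed
    finally show "(\<Oplus>x\<in>B. (\<alpha> x \<ominus> \<beta> x) \<otimes> v x i) = \<zero>" .
  qed (use assms in auto)
  moreover have "\<alpha> x \<in> carrier R" "\<beta> x \<in> carrier R" using assms by auto
  ultimately show ?thesis using minus_zero_iff by blast
qed

end

context field begin
lemma inv_facts:
  assumes "c \<in> carrier R" "c \<noteq> \<zero>"
  shows "inv c \<in> carrier R" "inv c \<otimes> c = \<one>" "c \<otimes> inv c = \<one>" "inv c \<noteq> \<zero>"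
proof -
  have u: "c \<in> Units R" using assms field_Units by blast
  show "inv c \<in> carrier R" "inv c \<otimes> c = \<one>" "c \<otimes> inv c = \<one>" using u by auto
  show "inv c \<noteq> \<zero>"
  proof
    assume "inv c = \<zero>"
    then have "\<one> = \<zero> \<otimes> c" using \<open>inv c \<otimes> c = \<one>\<close> by simp
    then show False using assms by simp
  qed
qed
end

context rep begin

lemma coord:
  assumes B: "basis E Ind B" and e: "e \<in> E"
  shows "\<exists>a. a \<in> B \<rightarrow> carrier R \<and> (\<forall>i<r. v e i = (\<Oplus>x\<in>B. a x \<otimes> v x i))"
proof (cases "e \<in> B")
  case True
  have fB: "finite B" using B indep_fin unfolding basis_def by blast
  have sB: "B \<subseteq> E" using B indep_sub unfolding basis_def by blast
  show ?thesis
  proof (intro exI conjI allI impI)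
    show "(\<lambda>x. if x = e then \<one> else \<zero>) \<in> B \<rightarrow> carrier R" by auto
    fix i assume i: "i < r"
    have vB: "\<And>x. x \<in> B \<Longrightarrow> v x i \<in> carrier R" using sB vc i by blast
    show "v e i = (\<Oplus>x\<in>B. (if x = e then \<one> else \<zero>) \<otimes> v x i)"
      using vB True fB by (subst finsum_point[of _ e]) auto
  qed
next
  case False
  have iB: "Ind B" using B unfolding basis_def by blast
  have fB: "finite B" using iB indep_fin by blast
  have sB: "B \<subseteq> E" using iB indep_sub by blast
  have "\<not> Ind (insert e B)" using B False unfolding basis_def by blast
  then have "\<not> lin_indep_cols R r v (insert e B)" using ind sB e by blast
  then obtain c where cc: "\<forall>x\<in>insert e B. c x \<in> carrier R"
    and rel: "\<forall>i<r. (\<Oplus>x\<in>insert e B. c x \<otimes> v x i) = \<zero>" and nz: "\<exists>x\<in>insert e B. c x \<noteq> \<zero>"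
    unfolding lin_indep_cols_def by blast
  have relB: "(\<Oplus>x\<in>insert e B. c x \<otimes> v x i) = c e \<otimes> v e i \<oplus> (\<Oplus>x\<in>B. c x \<otimes> v x i)" if i: "i < r" for i
    using cc fB False vc[OF e i] vc[OF subsetD[OF sB] i] by (subst finsum_insert) auto
  have ce: "c e \<noteq> \<zero>"
  proof
    assume c0: "c e = \<zero>"
    have "c x = \<zero>" if x: "x \<in> B" for x
    proof (rule indepD[OF iB _ _ x])
      show "c \<in> B \<rightarrow> carrier R" using cc by auto
      fix i assume i: "i < r"
      have "(\<Oplus>x\<in>B. c x \<otimes> v x i) \<in> carrier R"
        using cc vc[OF subsetD[OF sB] i] by (intro finsum_closed) auto
      then show "(\<Oplus>x\<in>B. c x \<otimes> v x i) = \<zero>" using rel[rule_format, OF i] relB[OF i] c0 vc[OF e i] by auto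
    qed
    then show False using nz c0 by auto
  qed
  have cec: "c e \<in> carrier R" using cc by auto
  note inv = inv_facts[OF cec ce]
  show ?thesis
  proof (intro exI conjI allI impI)
    show "(\<lambda>x. \<ominus> (inv (c e) \<otimes> c x)) \<in> B \<rightarrow> carrier R" using cc inv by auto
    fix i assume i: "i < r"
    have vB: "\<And>x. x \<in> B \<Longrightarrow> v x i \<in> carrier R" using sB vc i by blast
    have cB: "\<And>x. x \<in> B \<Longrightarrow> c x \<in> carrier R" using cc by blast
    define S where "S = (\<Oplus>x\<in>B. c x \<otimes> v x i)"
    have Sc: "S \<in> carrier R" unfolding S_def using vB cB by (intro finsum_closed) auto
    have "(\<Oplus>x\<in>B. \<ominus> (inv (c e) \<otimes> c x) \<otimes> v x i) = (\<Oplus>x\<in>B. \<ominus> (inv (c e) \<otimes> (c x \<otimes> v x i)))"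
      using vB cB inv by (intro finsum_cong') (auto simp: l_minus m_assoc)
    also have "\<dots> = \<ominus> (\<Oplus>x\<in>B. inv (c e) \<otimes> (c x \<otimes> v x i))"
      using vB cB inv fB by (subst finsum_neg) auto
    also have "\<dots> = \<ominus> (inv (c e) \<otimes> S)"
      unfolding S_def using vB cB inv fB by (subst finsum_rdistr) auto
    also have "\<dots> = v e i"
    proof -
      have "c e \<otimes> v e i \<oplus> S = \<zero>" using rel[rule_format, OF i] relB[OF i] unfolding S_def by auto
      then have "inv (c e) \<otimes> (c e \<otimes> v e i \<oplus> S) = \<zero>" using inv by simp
      then have "inv (c e) \<otimes> (c e \<otimes> v e i) \<oplus> inv (c e) \<otimes> S = \<zero>"
        using inv Sc vc[OF e i] cec by (simp add: r_distr)
      moreover have "inv (c e) \<otimes> (c e \<otimes> v e i) = v e i"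
        using inv Sc vc[OF e i] cec by (simp add: m_assoc[symmetric])
      ultimately have "v e i \<oplus> inv (c e) \<otimes> S = \<zero>" by simp
      then show ?thesis using inv Sc vc[OF e i] sum_zero_eq_neg by (metis m_closed)
    qed
    finally show "v e i = (\<Oplus>x\<in>B. \<ominus> (inv (c e) \<otimes> c x) \<otimes> v x i)" by simp
  qed
qed

end

context rep begin

lemma subst_sum:
  assumes fY: "finite Y" and sB: "B \<subseteq> E" and fB: "finite B" and i: "i < r"
    and c: "c \<in> Y \<rightarrow> carrier R"
    and Ac: "\<And>z w. z \<in> Y \<Longrightarrow> w \<in> B \<Longrightarrow> A w z \<in> carrier R"
    and rep: "\<And>z. z \<in> Y \<Longrightarrow> v z i = (\<Oplus>w\<in>B. A w z \<otimes> v w i)"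
  shows "(\<Oplus>z\<in>Y. c z \<otimes> v z i) = (\<Oplus>w\<in>B. (\<Oplus>z\<in>Y. c z \<otimes> A w z) \<otimes> v w i)"
  using fY c Ac rep
proof (induction Y rule: finite_induct)
  case empty
  have vB: "\<And>x. x \<in> B \<Longrightarrow> v x i \<in> carrier R" using sB vc i by blast
  have "(\<Oplus>w\<in>B. \<zero> \<otimes> v w i) = (\<Oplus>w\<in>B. \<zero>)" using vB by (intro finsum_cong') auto
  then show ?case by simp
next
  case (insert y Y)
  have vB: "\<And>x. x \<in> B \<Longrightarrow> v x i \<in> carrier R" using sB vc i by blast
  have cy: "c y \<in> carrier R" and cY: "\<And>z. z \<in> Y \<Longrightarrow> c z \<in> carrier R" using insert by auto
  have Ay: "\<And>w. w \<in> B \<Longrightarrow> A w y \<in> carrier R" using insert by auto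
  have AY: "\<And>z w. z \<in> Y \<Longrightarrow> w \<in> B \<Longrightarrow> A w z \<in> carrier R" using insert by auto
  have vY: "\<And>z. z \<in> insert y Y \<Longrightarrow> v z i \<in> carrier R"
  proof -
    fix z assume "z \<in> insert y Y"
    then show "v z i \<in> carrier R" using insert.prems(3)[of z] vB insert.prems(2)[of z]
      by (auto intro!: finsum_closed)
  qed
  have SY: "\<And>w. w \<in> B \<Longrightarrow> (\<Oplus>z\<in>Y. c z \<otimes> A w z) \<in> carrier R"
    using cY AY by (auto intro!: finsum_closed)
  have "(\<Oplus>z\<in>insert y Y. c z \<otimes> v z i) = c y \<otimes> v y i \<oplus> (\<Oplus>z\<in>Y. c z \<otimes> v z i)"
    using insert.hyps cy cY vY by (subst finsum_insert) auto
  also have "(\<Oplus>z\<in>Y. c z \<otimes> v z i) = (\<Oplus>w\<in>B. (\<Oplus>z\<in>Y. c z \<otimes> A w z) \<otimes> v w i)"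
    using insert by (intro insert.IH) auto
  also have "c y \<otimes> v y i = (\<Oplus>w\<in>B. (c y \<otimes> A w y) \<otimes> v w i)"
  proof -
    have "c y \<otimes> v y i = (\<Oplus>w\<in>B. c y \<otimes> (A w y \<otimes> v w i))"
      using insert.prems(3)[of y] cy Ay vB fB by (simp add: finsum_rdistr)
    also have "\<dots> = (\<Oplus>w\<in>B. (c y \<otimes> A w y) \<otimes> v w i)"
      using cy Ay vB by (intro finsum_cong') (auto simp: m_assoc)
    finally show ?thesis .
  qed
  also have "(\<Oplus>w\<in>B. (c y \<otimes> A w y) \<otimes> v w i) \<oplus> (\<Oplus>w\<in>B. (\<Oplus>z\<in>Y. c z \<otimes> A w z) \<otimes> v w i)
      = (\<Oplus>w\<in>B. (c y \<otimes> A w y) \<otimes> v w i \<oplus> (\<Oplus>z\<in>Y. c z \<otimes> A w z) \<otimes> v w i)"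
    using cy Ay vB SY by (subst finsum_addf) auto
  also have "\<dots> = (\<Oplus>w\<in>B. (\<Oplus>z\<in>insert y Y. c z \<otimes> A w z) \<otimes> v w i)"
  proof (intro finsum_cong')
    fix w assume w: "w \<in> B"
    have "(\<Oplus>z\<in>insert y Y. c z \<otimes> A w z) = c y \<otimes> A w y \<oplus> (\<Oplus>z\<in>Y. c z \<otimes> A w z)"
      using insert.hyps cy cY Ay[OF w] AY[OF _ w] by (subst finsum_insert) auto
    then show "(c y \<otimes> A w y) \<otimes> v w i \<oplus> (\<Oplus>z\<in>Y. c z \<otimes> A w z) \<otimes> v w i
       = (\<Oplus>z\<in>insert y Y. c z \<otimes> A w z) \<otimes> v w i"
      using cy Ay[OF w] SY[OF w] vB[OF w] by (simp add: l_distr)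
  next
    show "(\<lambda>w. (\<Oplus>z\<in>insert y Y. c z \<otimes> A w z) \<otimes> v w i) \<in> B \<rightarrow> carrier R"
      using cy cY Ay AY vB by (auto intro!: finsum_closed)
  qed simp
  finally show ?case .
qed

end

context rep begin

lemma crit_indep:
  assumes B: "Ind B" and XB: "X \<subseteq> B" and YE: "Y \<subseteq> E" and YB: "Y \<inter> B = {}"
    and Ac: "\<And>z w. z \<in> Y \<Longrightarrow> w \<in> B \<Longrightarrow> A w z \<in> carrier R"
    and rep: "\<And>z i. z \<in> Y \<Longrightarrow> i < r \<Longrightarrow> v z i = (\<Oplus>w\<in>B. A w z \<otimes> v w i)"
    and ker: "\<And>c. c \<in> Y \<rightarrow> carrier R \<Longrightarrow> (\<And>x. x \<in> X \<Longrightarrow> (\<Oplus>y\<in>Y. c y \<otimes> A x y) = \<zero>)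
               \<Longrightarrow> (\<And>y. y \<in> Y \<Longrightarrow> c y = \<zero>)"
  shows "Ind ((B - X) \<union> Y)"
proof -
  have fB: "finite B" using B indep_fin by blast
  have sB: "B \<subseteq> E" using B indep_sub by blast
  have fY: "finite Y" using YE finE finite_subset by blast
  let ?S = "(B - X) \<union> Y"
  have "lin_indep_cols R r v ?S"
    unfolding lin_indep_cols_def
  proof (intro allI impI ballI)
    fix c x
    assume H: "(\<forall>x\<in>?S. c x \<in> carrier R) \<and> (\<forall>i<r. (\<Oplus>x\<in>?S. c x \<otimes> v x i) = \<zero>)"
    assume x: "x \<in> ?S"
    have cS: "\<And>x. x \<in> ?S \<Longrightarrow> c x \<in> carrier R" using H by blast
    define ct where "ct w = (if w \<in> X then \<zero> else c w)" for w
    define co where "co w = ct w \<oplus> (\<Oplus>y\<in>Y. c y \<otimes> A w y)" for w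
    have ctc: "\<And>w. w \<in> B \<Longrightarrow> ct w \<in> carrier R" using cS unfolding ct_def by auto
    have SYc: "\<And>w. w \<in> B \<Longrightarrow> (\<Oplus>y\<in>Y. c y \<otimes> A w y) \<in> carrier R"
      using cS Ac by (auto intro!: finsum_closed)
    have coc: "co \<in> B \<rightarrow> carrier R" using ctc SYc unfolding co_def by auto
    have co0: "co w = \<zero>" if w: "w \<in> B" for w
    proof (rule indepD[OF B coc _ w])
      fix i assume i: "i < r"
      have vB: "\<And>x. x \<in> B \<Longrightarrow> v x i \<in> carrier R" using sB vc i by blast
      have vY: "\<And>x. x \<in> Y \<Longrightarrow> v x i \<in> carrier R" using YE vc i by blast
      have "(\<Oplus>x\<in>?S. c x \<otimes> v x i) = (\<Oplus>x\<in>B - X. c x \<otimes> v x i) \<oplus> (\<Oplus>x\<in>Y. c x \<otimes> v x i)"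
        using fB fY YB cS vB vY by (subst finsum_Un_disjoint) auto
      also have "(\<Oplus>x\<in>B - X. c x \<otimes> v x i) = (\<Oplus>x\<in>B. ct x \<otimes> v x i)"
      proof -
        have "B = (B - X) \<union> X" using XB by blast
        then have "(\<Oplus>x\<in>B. ct x \<otimes> v x i) = (\<Oplus>x\<in>(B - X) \<union> X. ct x \<otimes> v x i)" by simp
        also have "\<dots> = (\<Oplus>x\<in>B - X. ct x \<otimes> v x i) \<oplus> (\<Oplus>x\<in>X. ct x \<otimes> v x i)"
          using fB XB ctc vB by (subst finsum_Un_disjoint) (auto intro: finite_subset)
        also have "(\<Oplus>x\<in>X. ct x \<otimes> v x i) = \<zero>"
        proof -
          have "(\<Oplus>x\<in>X. ct x \<otimes> v x i) = (\<Oplus>x\<in>X. \<zero>)"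
            using XB vB by (intro finsum_cong') (auto simp: ct_def)
          then show ?thesis by simp
        qed
        also have "(\<Oplus>x\<in>B - X. ct x \<otimes> v x i) = (\<Oplus>x\<in>B - X. c x \<otimes> v x i)"
          using vB cS by (intro finsum_cong') (auto simp: ct_def)
        finally show ?thesis using vB cS by (auto intro!: finsum_closed)
      qed
      also have "(\<Oplus>x\<in>Y. c x \<otimes> v x i) = (\<Oplus>w\<in>B. (\<Oplus>z\<in>Y. c z \<otimes> A w z) \<otimes> v w i)"
        using fY sB fB i cS Ac rep by (intro subst_sum) auto
      also have "(\<Oplus>x\<in>B. ct x \<otimes> v x i) \<oplus> (\<Oplus>w\<in>B. (\<Oplus>z\<in>Y. c z \<otimes> A w z) \<otimes> v w i)
          = (\<Oplus>w\<in>B. ct w \<otimes> v w i \<oplus> (\<Oplus>z\<in>Y. c z \<otimes> A w z) \<otimes> v w i)"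
        using ctc vB SYc by (subst finsum_addf) auto
      also have "\<dots> = (\<Oplus>w\<in>B. co w \<otimes> v w i)"
        using ctc vB SYc by (intro finsum_cong') (auto simp: co_def l_distr)
      finally show "(\<Oplus>w\<in>B. co w \<otimes> v w i) = \<zero>" using H i by auto
    qed
    have cY: "c y = \<zero>" if y: "y \<in> Y" for y
    proof (rule ker[OF _ _ y])
      show "c \<in> Y \<rightarrow> carrier R" using cS by auto
      fix x assume xX: "x \<in> X"
      then have "co x = \<zero>" using co0 XB by blast
      then show "(\<Oplus>y\<in>Y. c y \<otimes> A x y) = \<zero>" using xX SYc[of x] XB by (auto simp: co_def ct_def)
    qed
    show "c x = \<zero>"
    proof (cases "x \<in> Y")
      case True then show ?thesis using cY by blast
    next
      case False
      then have xB: "x \<in> B - X" using x by blast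
      have "(\<Oplus>y\<in>Y. c y \<otimes> A x y) = (\<Oplus>y\<in>Y. \<zero>)"
        using cY Ac xB by (intro finsum_cong') auto
      then have "(\<Oplus>y\<in>Y. c y \<otimes> A x y) = \<zero>" by simp
      then show ?thesis using co0[of x] xB cS[of x] by (simp add: co_def ct_def)
    qed
  qed
  moreover have "?S \<subseteq> E" using sB YE by blast
  ultimately show ?thesis using ind by blast
qed

lemma crit_basis:
  assumes B: "basis E Ind B" and XB: "X \<subseteq> B" and YE: "Y \<subseteq> E" and YB: "Y \<inter> B = {}"
    and card: "card X = card Y"
    and Ac: "\<And>z w. z \<in> Y \<Longrightarrow> w \<in> B \<Longrightarrow> A w z \<in> carrier R"
    and rep: "\<And>z i. z \<in> Y \<Longrightarrow> i < r \<Longrightarrow> v z i = (\<Oplus>w\<in>B. A w z \<otimes> v w i)"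
    and ker: "\<And>c. c \<in> Y \<rightarrow> carrier R \<Longrightarrow> (\<And>x. x \<in> X \<Longrightarrow> (\<Oplus>y\<in>Y. c y \<otimes> A x y) = \<zero>)
               \<Longrightarrow> (\<And>y. y \<in> Y \<Longrightarrow> c y = \<zero>)"
  shows "basis E Ind ((B - X) \<union> Y)"
proof (rule basis_of_card[OF M B])
  have iB: "Ind B" using B unfolding basis_def by blast
  show "Ind ((B - X) \<union> Y)"
    apply (rule crit_indep[OF iB XB YE YB, where A=A])
    using Ac rep ker by auto
  have fB: "finite B" using iB indep_fin by blast
  have fY: "finite Y" using YE finE finite_subset by blast
  have fX: "finite X" using XB fB finite_subset by blast
  have "card ((B - X) \<union> Y) = card (B - X) + card Y" using fB fY YB by (subst card_Un_disjoint) auto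
  also have "card (B - X) = card B - card X" using XB fX by (simp add: card_Diff_subset)
  finally show "card ((B - X) \<union> Y) = card B" using card card_mono[OF fB XB] by simp
qed

end

context rep begin

definition crd :: "nat set \<Rightarrow> nat \<Rightarrow> nat \<Rightarrow> nat" where
  "crd B w e = (SOME a. a \<in> B \<rightarrow> carrier R \<and> (\<forall>i<r. v e i = (\<Oplus>x\<in>B. a x \<otimes> v x i))) w"

lemma crd_props:
  assumes "basis E Ind B" "e \<in> E"
  shows "(\<lambda>w. crd B w e) \<in> B \<rightarrow> carrier R \<and> (\<forall>i<r. v e i = (\<Oplus>x\<in>B. crd B x e \<otimes> v x i))"
proof -
  define P where "P = (\<lambda>a. a \<in> B \<rightarrow> carrier R \<and> (\<forall>i<r. v e i = (\<Oplus>x\<in>B. a x \<otimes> v x i)))"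
  have "\<exists>a. P a" using coord[OF assms] unfolding P_def by blast
  then have "P (SOME a. P a)" by (rule someI_ex)
  moreover have "(\<lambda>w. crd B w e) = (SOME a. P a)" unfolding crd_def P_def by (rule refl)
  ultimately have "P (\<lambda>w. crd B w e)" by (simp only:)
  then show ?thesis unfolding P_def by blast
qed

lemma crd_c: "basis E Ind B \<Longrightarrow> e \<in> E \<Longrightarrow> w \<in> B \<Longrightarrow> crd B w e \<in> carrier R"
  using crd_props by blast

lemma crd_rep: "basis E Ind B \<Longrightarrow> e \<in> E \<Longrightarrow> i < r \<Longrightarrow> v e i = (\<Oplus>x\<in>B. crd B x e \<otimes> v x i)"
  using crd_props by blast

lemma crd_self:
  assumes B: "basis E Ind B" and e: "e \<in> B" and w: "w \<in> B"
  shows "crd B w e = (if w = e then \<one> else \<zero>)"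
proof -
  have iB: "Ind B" using B unfolding basis_def by blast
  have fB: "finite B" using iB indep_fin by blast
  have sB: "B \<subseteq> E" using iB indep_sub by blast
  show ?thesis
  proof (rule uniq[OF iB _ _ _ w])
    show "(\<lambda>w. crd B w e) \<in> B \<rightarrow> carrier R" using crd_c[OF B] e sB by blast
    show "(\<lambda>w. if w = e then \<one> else \<zero>) \<in> B \<rightarrow> carrier R" by auto
    fix i assume i: "i < r"
    have vB: "\<And>x. x \<in> B \<Longrightarrow> v x i \<in> carrier R" using sB vc i by blast
    have "(\<Oplus>x\<in>B. (if x = e then \<one> else \<zero>) \<otimes> v x i) = v e i"
      using vB e fB by (subst finsum_point[of _ e]) auto
    then show "(\<Oplus>x\<in>B. crd B x e \<otimes> v x i) = (\<Oplus>x\<in>B. (if x = e then \<one> else \<zero>) \<otimes> v x i)"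
      using crd_rep[OF B _ i, of e] e sB by auto
  qed
qed

lemma distinct_rows:
  assumes B1: "basis E Ind B1" and B2: "basis E Ind B2"
    and x: "x \<in> B1 - B2" and x': "x' \<in> B1 - B2" and xx: "x \<noteq> x'"
  shows "\<exists>y\<in>B2 - B1. crd B1 x y \<noteq> crd B1 x' y"
proof (rule ccontr)
  assume H: "\<not> ?thesis"
  have iB1: "Ind B1" using B1 unfolding basis_def by blast
  have iB2: "Ind B2" using B2 unfolding basis_def by blast
  have fB1: "finite B1" "B1 \<subseteq> E" using iB1 indep_fin indep_sub by auto
  have fB2: "finite B2" "B2 \<subseteq> E" using iB2 indep_fin indep_sub by auto
  have xE: "x \<in> E" using x fB1 by blast
  obtain \<beta> where \<beta>: "\<beta> \<in> B2 \<rightarrow> carrier R" "\<And>i. i < r \<Longrightarrow> v x i = (\<Oplus>z\<in>B2. \<beta> z \<otimes> v z i)"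
    using coord[OF B2 xE] by blast
  define co where "co w = (\<Oplus>z\<in>B2. \<beta> z \<otimes> crd B1 w z)" for w
  have cA: "\<And>z w. z \<in> B2 \<Longrightarrow> w \<in> B1 \<Longrightarrow> crd B1 w z \<in> carrier R" using crd_c[OF B1] fB2 by blast
  have coc: "co \<in> B1 \<rightarrow> carrier R" unfolding co_def using \<beta> cA by (auto intro!: finsum_closed)
  have eqco: "\<And>w. w \<in> B1 \<Longrightarrow> co w = (if w = x then \<one> else \<zero>)"
  proof (rule uniq[OF iB1 coc])
    show "(\<lambda>w. if w = x then \<one> else \<zero>) \<in> B1 \<rightarrow> carrier R" by auto
    fix i assume i: "i < r"
    have vB: "\<And>w. w \<in> B1 \<Longrightarrow> v w i \<in> carrier R" using fB1 vc i by blast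
    have "(\<Oplus>w\<in>B1. co w \<otimes> v w i) = (\<Oplus>z\<in>B2. \<beta> z \<otimes> v z i)"
      unfolding co_def
      by (rule subst_sum[symmetric, OF fB2(1) fB1(2) fB1(1) i \<beta>(1) cA crd_rep[OF B1 _ i]])
         (use fB2 in auto)
    also have "\<dots> = v x i" using \<beta>(2)[OF i] by simp
    also have "\<dots> = (\<Oplus>w\<in>B1. (if w = x then \<one> else \<zero>) \<otimes> v w i)"
      using vB x fB1 by (subst finsum_point[of _ x]) auto
    finally show "(\<Oplus>w\<in>B1. co w \<otimes> v w i) = (\<Oplus>w\<in>B1. (if w = x then \<one> else \<zero>) \<otimes> v w i)" .
  qed
  have "co x = co x'"
    unfolding co_def
  proof (intro finsum_cong')
    fix z assume z: "z \<in> B2"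
    show "\<beta> z \<otimes> crd B1 x z = \<beta> z \<otimes> crd B1 x' z"
    proof (cases "z \<in> B1")
      case True
      then show ?thesis using crd_self[OF B1 True] x x' z by auto
    next
      case False then show ?thesis using H z by auto
    qed
  next
    show "(\<lambda>z. \<beta> z \<otimes> crd B1 x' z) \<in> B2 \<rightarrow> carrier R" using \<beta> cA x' by auto
  qed simp
  then show False using eqco x x' xx by auto
qed

end

context field begin

lemma sum_ones: "(\<Oplus>u\<in>{..<n::nat}. \<one>) = [n] \<cdot> \<one>"
proof (induction n)
  case 0 then show ?case by simp
next
  case (Suc n)
  have "(\<Oplus>u\<in>{..<Suc n}. \<one>) = \<one> \<oplus> (\<Oplus>u\<in>{..<n}. \<one>)"
    by (subst lessThan_Suc, subst finsum_insert) auto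
  also have "\<dots> = [n] \<cdot> \<one> \<oplus> \<one>" using Suc by (simp add: a_comm)
  finally show ?case by simp
qed

lemma char_zero:
  assumes fin: "finite (carrier R)" and dv: "card (carrier R) dvd N"
  shows "(\<Oplus>u\<in>{..<N::nat}. \<one>) = \<zero>"
proof -
  obtain m where m: "N = card (carrier R) * m" using dv by blast
  have "[card (carrier R)] \<cdot> \<one> = \<zero>" using add.pow_order_eq_1[of \<one>] by (simp add: order_def)
  then have "[m] \<cdot> ([card (carrier R)] \<cdot> \<one>) = \<zero>"
    by (simp add: add.nat_pow_one)
  then show ?thesis unfolding sum_ones m using add.nat_pow_pow[of \<one>] by simp
qed

lemma unit_pow:
  assumes fin: "finite (carrier R)" and x: "x \<in> carrier R" "x \<noteq> \<zero>"
    and dv: "(card (carrier R) - 1) dvd N"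
  shows "x [^] (N::nat) = \<one>"
proof -
  interpret G: group "mult_of R" by (rule field_mult_group)
  have "x \<in> carrier (mult_of R)" using x by simp
  then have "x [^]\<^bsub>mult_of R\<^esub> order (mult_of R) = \<one>\<^bsub>mult_of R\<^esub>" by (rule G.pow_order_eq_1)
  then have e: "x [^] (card (carrier R) - 1) = \<one>"
    using order_mult_of[OF fin] by (simp add: nat_pow_mult_of order_def)
  obtain m where m: "N = (card (carrier R) - 1) * m" using dv by blast
  show ?thesis unfolding m using nat_pow_pow[OF x(1)] e by (metis nat_pow_one)
qed

lemma geom_tele:
  assumes x: "x \<in> carrier R"
  shows "(x \<ominus> \<one>) \<otimes> (\<Oplus>u\<in>{..<N::nat}. x [^] u) = x [^] N \<ominus> \<one>"
proof (induction N)
  case 0 then show ?case using x by simp algebra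
next
  case (Suc N)
  have S: "(\<Oplus>u\<in>{..<Suc N}. x [^] u) = x [^] N \<oplus> (\<Oplus>u\<in>{..<N}. x [^] u)"
    using x by (subst lessThan_Suc, subst finsum_insert) auto
  have c: "(\<Oplus>u\<in>{..<N}. x [^] u) \<in> carrier R" using x by (auto intro!: finsum_closed)
  have p: "x [^] N \<in> carrier R" using x by simp
  have "(x \<ominus> \<one>) \<otimes> (x [^] N \<oplus> (\<Oplus>u\<in>{..<N}. x [^] u))
      = (x \<ominus> \<one>) \<otimes> x [^] N \<oplus> (x \<ominus> \<one>) \<otimes> (\<Oplus>u\<in>{..<N}. x [^] u)"
    using c p x by (simp add: r_distr)
  also have "\<dots> = (x \<ominus> \<one>) \<otimes> x [^] N \<oplus> (x [^] N \<ominus> \<one>)" using Suc by simp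
  also have "\<dots> = x [^] N \<otimes> x \<ominus> \<one>" using p x by algebra
  finally show ?case unfolding S by simp
qed

lemma geom_zero:
  assumes fin: "finite (carrier R)" and x: "x \<in> carrier R" "x \<noteq> \<zero>"
    and dv: "card (carrier R) * (card (carrier R) - 1) dvd N"
  shows "(\<Oplus>u\<in>{..<N::nat}. x [^] u) = \<zero>"
proof (cases "x = \<one>")
  case True
  have "(\<Oplus>u\<in>{..<N}. x [^] u) = (\<Oplus>u\<in>{..<N}. \<one>)" using True by simp
  also have "\<dots> = \<zero>" using char_zero[OF fin] dv dvd_mult_left by blast
  finally show ?thesis .
next
  case False
  have "x [^] N = \<one>" using unit_pow[OF fin x] dv dvd_mult_right by blast
  then have "(x \<ominus> \<one>) \<otimes> (\<Oplus>u\<in>{..<N}. x [^] u) = \<zero>" using geom_tele[OF x(1)] by simp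
  moreover have "x \<ominus> \<one> \<noteq> \<zero>" using False x minus_zero_iff by auto
  moreover have "(\<Oplus>u\<in>{..<N}. x [^] u) \<in> carrier R" using x by (auto intro!: finsum_closed)
  ultimately show ?thesis using x integral_iff by auto
qed

end

definition Mx :: "'a \<Rightarrow> 'a \<Rightarrow> 'a \<Rightarrow> nat \<Rightarrow> nat \<Rightarrow> 'a" where
  "Mx a b d t u = (if u < t then b else if u = t then d else a)"

context field begin

lemma Mx_c: "a \<in> carrier R \<Longrightarrow> b \<in> carrier R \<Longrightarrow> d \<in> carrier R \<Longrightarrow> Mx a b d t u \<in> carrier R"
  unfolding Mx_def by auto

lemma kernel_step:
  assumes abd: "a \<in> carrier R" "b \<in> carrier R" "d \<in> carrier R"
    and c: "\<And>u. u < N \<Longrightarrow> c u \<in> carrier R"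
    and rows: "\<And>t. t < N \<Longrightarrow> (\<Oplus>u\<in>{..<N}. Mx a b d t u \<otimes> c u) = \<zero>"
    and t: "Suc t < N"
  shows "(d \<ominus> b) \<otimes> c t \<oplus> (a \<ominus> d) \<otimes> c (Suc t) = \<zero>"
proof -
  have Mc: "\<And>t u. Mx a b d t u \<in> carrier R" using Mx_c abd by blast
  have "\<zero> = (\<Oplus>u\<in>{..<N}. Mx a b d t u \<otimes> c u) \<ominus> (\<Oplus>u\<in>{..<N}. Mx a b d (Suc t) u \<otimes> c u)"
    using rows[of t] rows[of "Suc t"] t by (simp add: minus_eq)
  also have "\<dots> = (\<Oplus>u\<in>{..<N}. Mx a b d t u \<otimes> c u \<ominus> Mx a b d (Suc t) u \<otimes> c u)"
    using Mc c by (subst finsum_diff) auto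
  also have "\<dots> = (\<Oplus>u\<in>{..<N}. (Mx a b d t u \<ominus> Mx a b d (Suc t) u) \<otimes> c u)"
  proof (intro finsum_cong')
    fix u assume "u \<in> {..<N}"
    then have cu: "c u \<in> carrier R" using c by auto
    show "Mx a b d t u \<otimes> c u \<ominus> Mx a b d (Suc t) u \<otimes> c u = (Mx a b d t u \<ominus> Mx a b d (Suc t) u) \<otimes> c u"
      using Mc[of t u] Mc[of "Suc t" u] cu by algebra
  qed (use Mc c in auto)
  also have "\<dots> = (Mx a b d t t \<ominus> Mx a b d (Suc t) t) \<otimes> c t \<oplus>
        (Mx a b d t (Suc t) \<ominus> Mx a b d (Suc t) (Suc t)) \<otimes> c (Suc t)"
  proof (rule finsum_two)
    show "(\<lambda>u. (Mx a b d t u \<ominus> Mx a b d (Suc t) u) \<otimes> c u) \<in> {..<N} \<rightarrow> carrier R"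
      using Mc c by auto
    fix u assume u: "u \<in> {..<N}" "u \<noteq> t" "u \<noteq> Suc t"
    then have "Mx a b d t u = Mx a b d (Suc t) u" unfolding Mx_def by auto
    then show "(Mx a b d t u \<ominus> Mx a b d (Suc t) u) \<otimes> c u = \<zero>"
    proof -
      have "Mx a b d (Suc t) u \<ominus> Mx a b d (Suc t) u = \<zero>" using Mc[of "Suc t" u] minus_zero_iff by blast
      then show ?thesis using \<open>Mx a b d t u = Mx a b d (Suc t) u\<close> c[of u] u by simp
    qed
  qed (use t in auto)
  also have "\<dots> = (d \<ominus> b) \<otimes> c t \<oplus> (a \<ominus> d) \<otimes> c (Suc t)" unfolding Mx_def by simp
  finally show ?thesis by simp
qed

end

context field begin

lemma kernel:
  assumes fin: "finite (carrier R)" and dv: "card (carrier R) * (card (carrier R) - 1) dvd N"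
    and N: "0 < N"
    and abd: "a \<in> carrier R" "b \<in> carrier R" "d \<in> carrier R"
    and h1: "d \<noteq> \<zero> \<or> (d \<noteq> a \<and> d \<noteq> b)" and h2: "d \<noteq> a \<or> d \<noteq> b"
    and c: "\<And>u. u < N \<Longrightarrow> c u \<in> carrier R"
    and rows: "\<And>t. t < N \<Longrightarrow> (\<Oplus>u\<in>{..<N}. Mx a b d t u \<otimes> c u) = \<zero>"
    and t: "t < N"
  shows "c t = \<zero>"
proof -
  have Mc: "\<And>t u. Mx a b d t u \<in> carrier R" using Mx_c abd by blast
  have step: "(d \<ominus> b) \<otimes> c s \<oplus> (a \<ominus> d) \<otimes> c (Suc s) = \<zero>" if ss: "Suc s < N" for s
    by (rule kernel_step[OF abd, of N c]) (use c rows ss in auto)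
  show ?thesis
  proof (cases "d = a")
    case True
    then have db: "d \<noteq> b" and d0: "d \<noteq> \<zero>" using h1 h2 by auto
    have dbz: "d \<ominus> b \<noteq> \<zero>" using db abd minus_zero_iff by auto
    have early: "c s = \<zero>" if s: "Suc s < N" for s
    proof -
      have "(d \<ominus> b) \<otimes> c s \<oplus> (a \<ominus> d) \<otimes> c (Suc s) = \<zero>" using step[OF s] .
      moreover have "a \<ominus> d = \<zero>" using True abd minus_zero_iff by auto
      ultimately have "(d \<ominus> b) \<otimes> c s = \<zero>" using c[of "Suc s"] c[of s] s abd by simp
      then show ?thesis using dbz integral_iff c[of s] s abd by auto
    qed
    show ?thesis
    proof (cases "Suc t < N")
      case True then show ?thesis using early by blast
    next
      case False
      then have tN: "t = N - 1" using t by auto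
      have "(\<Oplus>u\<in>{..<N}. Mx a b d t u \<otimes> c u) = Mx a b d t t \<otimes> c t"
      proof (rule finsum_point)
        show "(\<lambda>u. Mx a b d t u \<otimes> c u) \<in> {..<N} \<rightarrow> carrier R" using Mc c by auto
        fix u assume "u \<in> {..<N}" "u \<noteq> t"
        then have "Suc u < N" using tN by auto
        then show "Mx a b d t u \<otimes> c u = \<zero>" using early Mc by auto
      qed (use t in auto)
      then have "d \<otimes> c t = \<zero>" using rows[OF t] unfolding Mx_def by simp
      then show ?thesis using d0 integral_iff c[OF t] abd by auto
    qed
  next
    case False
    define e where "e = d \<ominus> a"
    have ec: "e \<in> carrier R" and e0: "e \<noteq> \<zero>" unfolding e_def using False abd minus_zero_iff by auto
    note iv = inv_facts[OF ec e0]
    define \<rho> where "\<rho> = (d \<ominus> b) \<otimes> inv e"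
    have \<rho>c: "\<rho> \<in> carrier R" unfolding \<rho>_def using abd iv by auto
    have recur: "c (Suc s) = \<rho> \<otimes> c s" if s: "Suc s < N" for s
    proof -
      have cs: "c s \<in> carrier R" "c (Suc s) \<in> carrier R" using c s by auto
      have H: "(d \<ominus> b) \<otimes> c s \<oplus> (a \<ominus> d) \<otimes> c (Suc s) = \<zero>" using step[OF s] .
      have "(d \<ominus> b) \<otimes> c s = \<ominus> ((a \<ominus> d) \<otimes> c (Suc s))"
        using sum_zero_eq_neg[OF _ _ H] cs abd by auto
      also have "\<dots> = e \<otimes> c (Suc s)" unfolding e_def using cs abd by algebra
      finally have E: "(d \<ominus> b) \<otimes> c s = e \<otimes> c (Suc s)" .
      have "\<rho> \<otimes> c s = inv e \<otimes> ((d \<ominus> b) \<otimes> c s)"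
        unfolding \<rho>_def using cs abd iv by algebra
      also have "\<dots> = inv e \<otimes> (e \<otimes> c (Suc s))" using E by simp
      also have "\<dots> = (inv e \<otimes> e) \<otimes> c (Suc s)" by (rule m_assoc[symmetric]) (use iv ec cs in auto)
      also have "\<dots> = c (Suc s)" using iv cs by simp
      finally show ?thesis by simp
    qed
    have pw: "s < N \<Longrightarrow> c s = \<rho> [^] s \<otimes> c 0" for s
    proof (induction s)
      case 0 then show ?case using c[of 0] by simp
    next
      case (Suc s)
      then have "c (Suc s) = \<rho> \<otimes> (\<rho> [^] s \<otimes> c 0)" using recur by simp
      also have "\<dots> = \<rho> [^] Suc s \<otimes> c 0" using \<rho>c c[of 0] N
        by (simp add: nat_pow_Suc2 m_assoc m_lcomm)
      finally show ?case .
    qed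
    have c0c: "c 0 \<in> carrier R" using c N by auto
    have row0: "(\<Oplus>u\<in>{..<N}. Mx a b d 0 u \<otimes> c u) = a \<otimes> (\<Oplus>u\<in>{..<N}. c u) \<oplus> (d \<ominus> a) \<otimes> c 0"
    proof -
      have "(\<Oplus>u\<in>{..<N}. Mx a b d 0 u \<otimes> c u)
          = (\<Oplus>u\<in>{..<N}. a \<otimes> c u \<oplus> (if u = 0 then (d \<ominus> a) \<otimes> c u else \<zero>))"
      proof (intro finsum_cong')
        fix u assume "u \<in> {..<N}"
        then have cu: "c u \<in> carrier R" using c by auto
        show "Mx a b d 0 u \<otimes> c u = a \<otimes> c u \<oplus> (if u = 0 then (d \<ominus> a) \<otimes> c u else \<zero>)"
          unfolding Mx_def using cu abd by (cases "u = 0") (simp, algebra, simp)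
      qed (use c abd in auto)
      also have "\<dots> = (\<Oplus>u\<in>{..<N}. a \<otimes> c u) \<oplus> (\<Oplus>u\<in>{..<N}. (if u = 0 then (d \<ominus> a) \<otimes> c u else \<zero>))"
        using c abd by (subst finsum_addf) auto
      also have "(\<Oplus>u\<in>{..<N}. (if u = 0 then (d \<ominus> a) \<otimes> c u else \<zero>)) = (d \<ominus> a) \<otimes> c 0"
        using c abd N by (subst finsum_point[of _ 0]) auto
      also have "(\<Oplus>u\<in>{..<N}. a \<otimes> c u) = a \<otimes> (\<Oplus>u\<in>{..<N}. c u)"
        using c abd by (subst finsum_rdistr) auto
      finally show ?thesis .
    qed
    have c0: "c 0 = \<zero>"
    proof (cases "\<rho> = \<zero>")
      case True
      have "d \<ominus> b = \<zero>"
      proof -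
        have "(d \<ominus> b) \<otimes> inv e = \<zero>" using True unfolding \<rho>_def .
        then show ?thesis using integral_iff iv abd by auto
      qed
      then have "d = b" using abd minus_zero_iff by auto
      then have d0: "d \<noteq> \<zero>" using h1 by auto
      have "(\<Oplus>u\<in>{..<N}. c u) = c 0"
      proof (rule finsum_point)
        fix u assume "u \<in> {..<N}" "u \<noteq> 0"
        then have "c u = \<rho> [^] u \<otimes> c 0" using pw by blast
        moreover have "\<rho> [^] u = \<zero>" using True \<open>u \<noteq> 0\<close> by (cases u) (auto simp: nat_pow_Suc2)
        ultimately show "c u = \<zero>" using c0c by simp
      qed (use N c in auto)
      then have "a \<otimes> c 0 \<oplus> (d \<ominus> a) \<otimes> c 0 = \<zero>" using row0 rows[OF N] by simp
      moreover have "a \<otimes> c 0 \<oplus> (d \<ominus> a) \<otimes> c 0 = d \<otimes> c 0" using abd c0c by algebra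
      ultimately show ?thesis using d0 integral_iff abd c0c by auto
    next
      case False
      have "(\<Oplus>u\<in>{..<N}. c u) = (\<Oplus>u\<in>{..<N}. \<rho> [^] u \<otimes> c 0)"
      proof (intro finsum_cong')
        fix u assume "u \<in> {..<N}"
        then show "c u = \<rho> [^] u \<otimes> c 0" using pw by blast
      qed (use \<rho>c c0c in auto)
      also have "\<dots> = (\<Oplus>u\<in>{..<N}. \<rho> [^] u) \<otimes> c 0"
        using \<rho>c c0c by (subst finsum_ldistr) auto
      also have "(\<Oplus>u\<in>{..<N}. \<rho> [^] u) = \<zero>" using geom_zero[OF fin \<rho>c False dv] .
      finally have "(\<Oplus>u\<in>{..<N}. c u) = \<zero>" using c0c by simp
      then have "(d \<ominus> a) \<otimes> c 0 = \<zero>" using row0 rows[OF N] abd c0c by simp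
      then show ?thesis using e0 integral_iff ec c0c unfolding e_def by auto
    qed
    have "c t = \<rho> [^] t \<otimes> c 0" using pw t by blast
    then show ?thesis using c0 \<rho>c by simp
  qed
qed

end

lemma seq_exists:
  fixes A :: "nat \<Rightarrow> nat \<Rightarrow> 'v"
  assumes q: "2 \<le> q" and fV: "finite V" and cV: "card V \<le> q"
  shows "finite R \<Longrightarrow> card R \<ge> q ^ L \<Longrightarrow> (\<And>x y. x \<in> R \<Longrightarrow> y \<in> C \<Longrightarrow> A x y \<in> V)
    \<Longrightarrow> (\<And>x x'. x \<in> R \<Longrightarrow> x' \<in> R \<Longrightarrow> x \<noteq> x' \<Longrightarrow> \<exists>y\<in>C. A x y \<noteq> A x' y)
    \<Longrightarrow> \<exists>xs ys w. (\<forall>i<L. xs i \<in> R \<and> ys i \<in> C \<and> A (xs i) (ys i) \<noteq> w i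
          \<and> (\<forall>j<L. i < j \<longrightarrow> A (xs j) (ys i) = w i)) \<and> inj_on xs {..<L} \<and> inj_on ys {..<L}"
proof (induction L arbitrary: R C)
  case 0 then show ?case by auto
next
  case (Suc L)
  have "1 \<le> q ^ L" using q by simp
  then have "q * 1 \<le> q * q ^ L" by (rule mult_le_mono2)
  then have "q \<le> q * q ^ L" by simp
  then have "card R \<ge> 2" using Suc.prems(2) q by (simp only: power_Suc)
  then have "\<not> card R \<le> Suc 0" by simp
  then obtain x0 x1 where x01: "x0 \<in> R" "x1 \<in> R" "x0 \<noteq> x1"
    using card_le_Suc0_iff_eq[OF Suc.prems(1)] by blast
  then obtain y where y: "y \<in> C" "A x0 y \<noteq> A x1 y" using Suc.prems(4) by blast
  define Cl where "Cl v = {x\<in>R. A x y = v}" for v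
  have "\<exists>v\<in>V. card (Cl v) \<ge> q ^ L"
  proof (rule ccontr)
    assume "\<not> ?thesis"
    then have lt: "\<And>v. v \<in> V \<Longrightarrow> card (Cl v) \<le> q ^ L - 1" by force
    have "R = (\<Union>v\<in>V. Cl v)" unfolding Cl_def using Suc.prems(3) y by auto
    then have "card R \<le> (\<Sum>v\<in>V. card (Cl v))" using card_UN_le[OF fV, of Cl] by simp
    also have "\<dots> \<le> (\<Sum>v\<in>V. q ^ L - 1)" using lt by (intro sum_mono) auto
    also have "\<dots> = card V * (q ^ L - 1)" by simp
    also have "\<dots> \<le> q * (q ^ L - 1)" using cV by simp
    also have "\<dots> < q * q ^ L" using q by (simp add: diff_less)
    finally show False using Suc.prems(2) by simp
  qed
  then obtain v where v: "v \<in> V" "card (Cl v) \<ge> q ^ L" by blast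
  obtain x where x: "x \<in> R" "A x y \<noteq> v" using x01 y by metis
  have fW: "finite (Cl v)" using Suc.prems(1) unfolding Cl_def by auto
  have "\<exists>xs ys w. (\<forall>i<L. xs i \<in> Cl v \<and> ys i \<in> C - {y} \<and> A (xs i) (ys i) \<noteq> w i
          \<and> (\<forall>j<L. i < j \<longrightarrow> A (xs j) (ys i) = w i)) \<and> inj_on xs {..<L} \<and> inj_on ys {..<L}"
  proof (rule Suc.IH[OF fW v(2)])
    show "\<And>x y'. x \<in> Cl v \<Longrightarrow> y' \<in> C - {y} \<Longrightarrow> A x y' \<in> V" using Suc.prems(3) unfolding Cl_def by auto
    fix x x' assume "x \<in> Cl v" "x' \<in> Cl v" "x \<noteq> x'"
    then obtain y' where "y' \<in> C" "A x y' \<noteq> A x' y'" using Suc.prems(4) unfolding Cl_def by blast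
    moreover have "A x y = A x' y" using \<open>x \<in> Cl v\<close> \<open>x' \<in> Cl v\<close> unfolding Cl_def by auto
    ultimately show "\<exists>y'\<in>C - {y}. A x y' \<noteq> A x' y'" by blast
  qed
  then obtain xs ys w where H: "\<forall>i<L. xs i \<in> Cl v \<and> ys i \<in> C - {y} \<and> A (xs i) (ys i) \<noteq> w i
          \<and> (\<forall>j<L. i < j \<longrightarrow> A (xs j) (ys i) = w i)" and ixs: "inj_on xs {..<L}" and iys: "inj_on ys {..<L}"
    by blast
  define xs' where "xs' i = (if i = 0 then x else xs (i - 1))" for i
  define ys' where "ys' i = (if i = 0 then y else ys (i - 1))" for i
  define w' where "w' i = (if i = 0 then v else w (i - 1))" for i
  show ?case
  proof (intro exI conjI allI impI)
    fix i assume i: "i < Suc L"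
    show "xs' i \<in> R" using H i x unfolding xs'_def Cl_def by auto
    show "ys' i \<in> C" using H i y unfolding ys'_def by auto
    show "A (xs' i) (ys' i) \<noteq> w' i" using H i x unfolding xs'_def ys'_def w'_def by auto
    fix j assume j: "j < Suc L" "i < j"
    show "A (xs' j) (ys' i) = w' i"
    proof (cases "i = 0")
      case True
      then have "xs (j - 1) \<in> Cl v" using H j by auto
      then show ?thesis using True j unfolding xs'_def ys'_def w'_def Cl_def by auto
    next
      case False
      then show ?thesis using H i j unfolding xs'_def ys'_def w'_def by auto
    qed
  next
    show "inj_on xs' {..<Suc L}"
    proof (rule inj_onI)
      fix i j assume ij: "i \<in> {..<Suc L}" "j \<in> {..<Suc L}" "xs' i = xs' j"
      have nx: "\<And>k. k < L \<Longrightarrow> xs k \<noteq> x" using H x unfolding Cl_def by auto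
      have ar: "i \<noteq> 0 \<Longrightarrow> i - 1 < L" "j \<noteq> 0 \<Longrightarrow> j - 1 < L" "i \<noteq> 0 \<Longrightarrow> j \<noteq> 0 \<Longrightarrow> i - 1 = j - 1 \<Longrightarrow> i = j"
        using ij by auto
      show "i = j"
        using ij nx[of "i - 1"] nx[of "j - 1"] ar inj_onD[OF ixs, of "i - 1" "j - 1"]
        unfolding xs'_def by (auto split: if_splits)
    qed
    show "inj_on ys' {..<Suc L}"
    proof (rule inj_onI)
      fix i j assume ij: "i \<in> {..<Suc L}" "j \<in> {..<Suc L}" "ys' i = ys' j"
      have nx: "\<And>k. k < L \<Longrightarrow> ys k \<noteq> y" using H by auto
      have ar: "i \<noteq> 0 \<Longrightarrow> i - 1 < L" "j \<noteq> 0 \<Longrightarrow> j - 1 < L" "i \<noteq> 0 \<Longrightarrow> j \<noteq> 0 \<Longrightarrow> i - 1 = j - 1 \<Longrightarrow> i = j"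
        using ij by auto
      show "i = j"
        using ij nx[of "i - 1"] nx[of "j - 1"] ar inj_onD[OF iys, of "i - 1" "j - 1"]
        unfolding ys'_def by (auto split: if_splits)
    qed
  qed
qed

lemma enum_set:
  fixes U :: "nat set"
  assumes "finite U"
  obtains g where "bij_betw g {..<card U} U" "\<And>t u. t < card U \<Longrightarrow> u < card U \<Longrightarrow> g t < g u \<longleftrightarrow> t < u"
proof -
  let ?l = "sorted_list_of_set U"
  have len: "length ?l = card U" using assms by simp
  have ds: "distinct ?l" and st: "sorted_wrt (<) ?l" using assms by auto
  have "bij_betw (\<lambda>t. ?l ! t) {..<card U} U"
    using assms len ds by (metis bij_betw_nth lessThan_atLeast0 set_sorted_list_of_set)
  moreover have "?l ! t < ?l ! u \<longleftrightarrow> t < u" if "t < card U" "u < card U" for t u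
  proof
    assume "t < u" then show "?l ! t < ?l ! u" using st that len by (simp add: sorted_wrt_nth_less)
  next
    assume *: "?l ! t < ?l ! u"
    show "t < u"
    proof (rule ccontr)
      assume "\<not> t < u"
      then have "u < t \<or> u = t" by auto
      then show False using * st that len sorted_wrt_nth_less[of "(<)" ?l u t] by auto
    qed
  qed
  ultimately show ?thesis using that by blast
qed

lemma ramsey_pattern:
  fixes P :: "nat \<Rightarrow> nat \<Rightarrow> 'c"
  assumes fV: "finite V" and ne: "V \<noteq> {}" and PV: "\<And>i j. i < j \<Longrightarrow> j < L \<Longrightarrow> P i j \<in> V"
    and ram: "partn_lst {..<L} (replicate (card V) n) 2"
  shows "\<exists>H T. H \<subseteq> {..<L} \<and> finite H \<and> card H = n \<and> (\<forall>i\<in>H. \<forall>j\<in>H. i < j \<longrightarrow> P i j = T)"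
proof -
  obtain enc where enc: "bij_betw enc V {..<card V}"
    using ex_bij_betw_finite_nat[OF fV] unfolding atLeast0LessThan by blast
  define f where "f S = enc (P (Min S) (Max S))" for S
  have f: "f \<in> nsets {..<L} 2 \<rightarrow> {..<card V}"
  proof
    fix S assume "S \<in> nsets {..<L} 2"
    then have S0: "S \<subseteq> {..<L}" "card S = 2" unfolding nsets_def by auto
    then obtain x y where xy: "S = {x, y}" "x \<noteq> y" by (meson card_2_iff)
    obtain i j where S: "S = {i, j}" "i < j" "j < L"
    proof (cases "x < y")
      case True then show ?thesis using that[of x y] xy S0 by auto
    next
      case False then have "y < x" using xy by auto
      then show ?thesis using that[of y x] xy S0 by (auto simp: insert_commute)
    qed
    then have "Min S = i" "Max S = j" by auto
    moreover have "enc (P i j) \<in> {..<card V}" using PV[OF S(2,3)] bij_betwE[OF enc] by blast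
    ultimately show "f S \<in> {..<card V}" unfolding f_def by simp
  qed
  obtain c H where c: "c < length (replicate (card V) n)" and H: "H \<in> nsets {..<L} (replicate (card V) n ! c)"
    and hom: "f ` nsets H 2 \<subseteq> {c}"
  proof (rule partn_lstE[OF ram f])
    fix i H assume "i < length (replicate (card V) n)" "H \<in> nsets {..<L} (replicate (card V) n ! i)"
      "f ` nsets H 2 \<subseteq> {i}"
    then show thesis using that by blast
  qed simp
  have Hc: "H \<subseteq> {..<L}" "finite H" "card H = n"
  proof -
    have "replicate (card V) n ! c = n" using c by simp
    then show "H \<subseteq> {..<L}" "finite H" "card H = n" using H unfolding nsets_def by auto
  qed
  define T where "T = the_inv_into V enc c"
  have inj: "inj_on enc V" using enc by (rule bij_betw_imp_inj_on)
  have PT: "P i j = T" if ij: "i \<in> H" "j \<in> H" "i < j" for i j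
  proof -
    have "{i, j} \<in> nsets H 2" using ij by simp
    then have "f {i, j} \<in> {c}" using hom by (meson image_eqI subsetD)
    then have "f {i, j} = c" by simp
    moreover have "Min {i, j} = i" "Max {i, j} = j" using ij by auto
    ultimately have "enc (P i j) = c" unfolding f_def by simp
    moreover have "P i j \<in> V" using PV ij Hc by auto
    ultimately show ?thesis unfolding T_def using the_inv_into_f_f[OF inj] by metis
  qed
  show ?thesis
    apply (rule exI[of _ H], rule exI[of _ T])
    using Hc PT by simp
qed

lemma Mx_iso:
  assumes "\<And>t u. t < N \<Longrightarrow> u < N \<Longrightarrow> g t < g u \<longleftrightarrow> t < u" "t < N" "u < N"
  shows "Mx a b d (g t) (g u) = Mx a b d t u"
proof -
  have "g u < g t \<longleftrightarrow> u < t" using assms by blast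
  moreover have "g u = g t \<longleftrightarrow> u = t" using assms(1)[of u t] assms(1)[of t u] assms(2,3)
    by (metis linorder_neqE_nat less_irrefl)
  ultimately show ?thesis unfolding Mx_def by simp
qed

context rep begin

lemma pattern_exchange:
  assumes fin: "finite (carrier R)"
    and B1: "basis E Ind B1" and B2: "basis E Ind B2"
    and s: "s = card (carrier R) * (card (carrier R) - 1)" and s0: "0 < s"
    and X: "\<And>t. t < k * s \<Longrightarrow> X t \<in> B1 - B2" and Y: "\<And>t. t < k * s \<Longrightarrow> Y t \<in> B2 - B1"
    and iX: "inj_on X {..<k * s}" and iY: "inj_on Y {..<k * s}"
    and abd: "a \<in> carrier R" "b \<in> carrier R" "d \<in> carrier R"
    and h1: "d \<noteq> \<zero> \<or> (d \<noteq> a \<and> d \<noteq> b)" and h2: "d \<noteq> a \<or> d \<noteq> b"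
    and pat: "\<And>t' t. t' < k * s \<Longrightarrow> t < k * s \<Longrightarrow> crd B1 (X t') (Y t) = Mx a b d t' t"
  shows "k_exchange E Ind k B1 B2"
proof -
  define blk where "blk i = {(i - 1) * s ..< i * s}" for i :: nat
  have blk_sub: "blk i \<subseteq> {..<k * s}" if "i \<in> {1..k}" for i
    using that unfolding blk_def by (auto intro: less_le_trans)
  have blk_ne: "blk i \<noteq> {}" if "i \<in> {1..k}" for i
  proof -
    have "(i - 1) * s < i * s" using that s0 by (cases i) auto
    then show ?thesis unfolding blk_def by auto
  qed
  have blk_card: "card (blk i) = s" if "i \<in> {1..k}" for i
  proof -
    have "i * s - (i - 1) * s = s" using that by (cases i) auto
    then show ?thesis unfolding blk_def by simp
  qed
  have blk_disj: "blk i \<inter> blk j = {}" if "i \<in> {1..k}" "j \<in> {1..k}" "i \<noteq> j" for i j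
  proof -
    have le: "i * s \<le> (j - 1) * s" if "i < j" for i j :: nat using that by (intro mult_le_mono1) auto
    have "i * s \<le> (j - 1) * s \<or> j * s \<le> (i - 1) * s"
      using le[of i j] le[of j i] that(3) by (cases "i < j") auto
    then show ?thesis unfolding blk_def by auto
  qed
  have sB1: "B1 \<subseteq> E" "finite B1" and sB2: "B2 \<subseteq> E"
    using B1 B2 indep_sub indep_fin unfolding basis_def by auto
  show ?thesis
    unfolding k_exchange_def
  proof (rule exI[of _ "\<lambda>i. X ` blk i"], rule exI[of _ "\<lambda>i. Y ` blk i"], intro conjI)
    show "\<forall>i\<in>{1..k}. X ` blk i \<noteq> {} \<and> X ` blk i \<subseteq> B1 - B2 \<and> Y ` blk i \<noteq> {} \<and> Y ` blk i \<subseteq> B2 - B1"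
    proof
      fix i assume i: "i \<in> {1..k}"
      show "X ` blk i \<noteq> {} \<and> X ` blk i \<subseteq> B1 - B2 \<and> Y ` blk i \<noteq> {} \<and> Y ` blk i \<subseteq> B2 - B1"
        using blk_ne[OF i] blk_sub[OF i] X Y by auto
    qed
    show "\<forall>i\<in>{1..k}. \<forall>j\<in>{1..k}. i \<noteq> j \<longrightarrow> X ` blk i \<inter> X ` blk j = {} \<and> Y ` blk i \<inter> Y ` blk j = {}"
    proof (intro ballI impI)
      fix i j assume i: "i \<in> {1..k}" and j: "j \<in> {1..k}" and ij: "i \<noteq> j"
      show "X ` blk i \<inter> X ` blk j = {} \<and> Y ` blk i \<inter> Y ` blk j = {}"
        using inj_on_image_Int[OF iX blk_sub[OF i] blk_sub[OF j]] 
          inj_on_image_Int[OF iY blk_sub[OF i] blk_sub[OF j]] blk_disj[OF i j ij] by simp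
    qed
  next
    show "\<forall>Z. Z \<subseteq> {1..k} \<longrightarrow> basis E Ind ((B1 - (\<Union>i\<in>Z. X ` blk i)) \<union> (\<Union>i\<in>Z. Y ` blk i))"
    proof (intro allI impI)
    fix Z assume Z: "Z \<subseteq> {1..k}"
    define U where "U = (\<Union>i\<in>Z. blk i)"
    have UX: "(\<Union>i\<in>Z. X ` blk i) = X ` U" "(\<Union>i\<in>Z. Y ` blk i) = Y ` U"
      unfolding U_def by auto
    have Usub: "U \<subseteq> {..<k * s}" unfolding U_def using blk_sub Z by blast
    have fZ: "finite Z" using Z finite_subset by blast
    have fU: "finite U" using Usub finite_subset by blast
    have cardU: "card U = card Z * s"
    proof -
      have "card U = (\<Sum>i\<in>Z. card (blk i))" unfolding U_def
        using fZ blk_disj Z by (intro card_UN_disjoint) (auto simp: blk_def)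
      also have "\<dots> = (\<Sum>i\<in>Z. s)" using blk_card Z by (intro sum.cong) auto
      finally show ?thesis by simp
    qed
    have iXU: "inj_on X U" and iYU: "inj_on Y U" using iX iY Usub inj_on_subset by blast+
    show "basis E Ind ((B1 - (\<Union>i\<in>Z. X ` blk i)) \<union> (\<Union>i\<in>Z. Y ` blk i))"
      unfolding UX
    proof (rule crit_basis[OF B1, where A = "crd B1"])
      show "X ` U \<subseteq> B1" "Y ` U \<subseteq> E" "Y ` U \<inter> B1 = {}" using X Y Usub sB2 by auto
      show "card (X ` U) = card (Y ` U)" using card_image[OF iXU] card_image[OF iYU] by simp
      show "\<And>z w. z \<in> Y ` U \<Longrightarrow> w \<in> B1 \<Longrightarrow> crd B1 w z \<in> carrier R"
        using crd_c[OF B1] Y Usub sB2 by blast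
      show "\<And>z i. z \<in> Y ` U \<Longrightarrow> i < r \<Longrightarrow> v z i = (\<Oplus>w\<in>B1. crd B1 w z \<otimes> v w i)"
        using crd_rep[OF B1] Y Usub sB2 by blast
      fix c y
      assume c: "c \<in> Y ` U \<rightarrow> carrier R"
        and rows: "\<And>x. x \<in> X ` U \<Longrightarrow> (\<Oplus>y\<in>Y ` U. c y \<otimes> crd B1 x y) = \<zero>"
        and y: "y \<in> Y ` U"
      define N where "N = card U"
      obtain g where g: "bij_betw g {..<N} U" and giso: "\<And>t u. t < N \<Longrightarrow> u < N \<Longrightarrow> g t < g u \<longleftrightarrow> t < u"
        using enum_set[OF fU] unfolding N_def by blast
      have gU: "\<And>t. t < N \<Longrightarrow> g t \<in> U" using g bij_betwE by blast
      have gimg: "g ` {..<N} = U" using g bij_betw_imp_surj_on by blast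
      have ig: "inj_on (Y \<circ> g) {..<N}"
        using g iYU by (simp add: bij_betw_def comp_inj_on)
      define c' where "c' u = c (Y (g u))" for u
      have c'c: "\<And>u. u < N \<Longrightarrow> c' u \<in> carrier R" unfolding c'_def using c gU by auto
      have N0: "0 < N" using y fU unfolding N_def by (auto simp: card_gt_0_iff)
      have dv: "card (carrier R) * (card (carrier R) - 1) dvd N" unfolding N_def cardU s by simp
      have Mc: "\<And>t u. Mx a b d t u \<in> carrier R" using Mx_c abd by blast
      have krow: "(\<Oplus>u\<in>{..<N}. Mx a b d t u \<otimes> c' u) = \<zero>" if t: "t < N" for t
      proof -
        have "\<zero> = (\<Oplus>y\<in>Y ` U. c y \<otimes> crd B1 (X (g t)) y)" using rows gU t by auto
        also have "Y ` U = (Y \<circ> g) ` {..<N}" using gimg image_comp[of Y g "{..<N}"] by simp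
        also have "(\<Oplus>y\<in>(Y \<circ> g) ` {..<N}. c y \<otimes> crd B1 (X (g t)) y)
            = (\<Oplus>u\<in>{..<N}. c (Y (g u)) \<otimes> crd B1 (X (g t)) (Y (g u)))"
        proof (subst finsum_reindex[OF _ ig])
          show "(\<lambda>y. c y \<otimes> crd B1 (X (g t)) y) \<in> (Y \<circ> g) ` {..<N} \<rightarrow> carrier R"
          proof
            fix y assume "y \<in> (Y \<circ> g) ` {..<N}"
            then obtain u where u: "u < N" "y = Y (g u)" by auto
            have yU: "y \<in> Y ` U" using u gU by auto
            have "g u \<in> U" "g t \<in> U" using u gU t by auto
            then have yE: "y \<in> E" and xB: "X (g t) \<in> B1" using u X Y Usub sB2 by auto
            show "c y \<otimes> crd B1 (X (g t)) y \<in> carrier R"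
              using c yU crd_c[OF B1 yE xB] by auto
          qed
        qed simp
        also have "\<dots> = (\<Oplus>u\<in>{..<N}. Mx a b d t u \<otimes> c' u)"
        proof (intro finsum_cong')
          fix u assume u: "u \<in> {..<N}"
          have "crd B1 (X (g t)) (Y (g u)) = Mx a b d (g t) (g u)"
            using pat gU t u Usub by blast
          also have "\<dots> = Mx a b d t u" using Mx_iso[OF giso] t u by simp
          finally show "c (Y (g u)) \<otimes> crd B1 (X (g t)) (Y (g u)) = Mx a b d t u \<otimes> c' u"
            using Mc c'c[of u] u unfolding c'_def by (simp add: m_comm)
        qed (use Mc c'c in auto)
        finally show ?thesis by simp
      qed
      obtain t where t: "t < N" "y = Y (g t)" using y gimg by auto
      have "c' t = \<zero>"
        by (rule kernel[OF fin dv N0 abd h1 h2, of c']) (use c'c krow t in auto)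
      then show "c y = \<zero>" unfolding c'_def using t by simp
    qed
    qed
  qed
qed

end

context rep begin

lemma main_rep:
  assumes fin: "finite (carrier R)" and q: "card (carrier R) = q" and k0: "0 < k"
    and L: "partn_lst {..<L} (replicate (q ^ 3) (k * (q * (q - 1)) + 2)) 2"
    and B1: "basis E Ind B1" and B2: "basis E Ind B2" and cd: "card (B1 - B2) \<ge> q ^ L"
  shows "k_exchange E Ind k B1 B2"
proof -
  define s where "s = q * (q - 1)"
  have q2: "2 \<le> q"
  proof -
    have "{\<zero>, \<one>} \<subseteq> carrier R" by auto
    then have "card {\<zero>, \<one>} \<le> card (carrier R)" by (rule card_mono[OF fin])
    then show ?thesis using q by simp
  qed
  have s0: "0 < s" unfolding s_def using q2 by simp
  have sB: "B1 \<subseteq> E" "B2 \<subseteq> E" "finite B1" "finite B2"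
    using B1 B2 indep_sub indep_fin unfolding basis_def by auto
  obtain xs ys w where seq: "\<forall>i<L. xs i \<in> B1 - B2 \<and> ys i \<in> B2 - B1 \<and> crd B1 (xs i) (ys i) \<noteq> w i
          \<and> (\<forall>j<L. i < j \<longrightarrow> crd B1 (xs j) (ys i) = w i)"
    and ixs: "inj_on xs {..<L}" and iys: "inj_on ys {..<L}"
  proof -
    have "\<exists>xs ys w. (\<forall>i<L. xs i \<in> B1 - B2 \<and> ys i \<in> B2 - B1 \<and> crd B1 (xs i) (ys i) \<noteq> w i
          \<and> (\<forall>j<L. i < j \<longrightarrow> crd B1 (xs j) (ys i) = w i)) \<and> inj_on xs {..<L} \<and> inj_on ys {..<L}"
    proof (rule seq_exists[OF q2 fin, where A = "crd B1"])
      show "card (carrier R) \<le> q" using q by simp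
      show "finite (B1 - B2)" using sB by simp
      show "q ^ L \<le> card (B1 - B2)" by (rule cd)
      show "\<And>x y. x \<in> B1 - B2 \<Longrightarrow> y \<in> B2 - B1 \<Longrightarrow> crd B1 x y \<in> carrier R"
        using crd_c[OF B1] sB by blast
      show "\<And>x x'. x \<in> B1 - B2 \<Longrightarrow> x' \<in> B1 - B2 \<Longrightarrow> x \<noteq> x' \<Longrightarrow> \<exists>y\<in>B2 - B1. crd B1 x y \<noteq> crd B1 x' y"
        using distinct_rows[OF B1 B2] by blast
    qed
    then show ?thesis using that by blast
  qed
  have xsB: "\<And>i. i < L \<Longrightarrow> xs i \<in> B1 - B2" and ysB: "\<And>i. i < L \<Longrightarrow> ys i \<in> B2 - B1"
    using seq by auto
  have seqw: "\<And>i j. i < L \<Longrightarrow> j < L \<Longrightarrow> i < j \<Longrightarrow> crd B1 (xs j) (ys i) = w i"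
    using seq by simp
  have seqn: "\<And>i. i < L \<Longrightarrow> crd B1 (xs i) (ys i) \<noteq> w i"
    using seq by simp
  have Ac: "\<And>i j. i < L \<Longrightarrow> j < L \<Longrightarrow> crd B1 (xs i) (ys j) \<in> carrier R"
    using crd_c[OF B1] xsB ysB sB by blast
  define n where "n = k * s + 2"
  define V where "V = carrier R \<times> carrier R \<times> carrier R"
  define P where "P i j = (crd B1 (xs i) (ys i), w i, crd B1 (xs i) (ys j))" for i j
  have cV: "card V = q ^ 3" unfolding V_def using q by (simp add: card_cartesian_product power3_eq_cube)
  have PV: "P i j \<in> V" if "i < j" "j < L" for i j
  proof -
    have "i < L" using that by simp
    then have "crd B1 (xs j) (ys i) = w i" using seqw that by blast
    moreover have "crd B1 (xs j) (ys i) \<in> carrier R" "crd B1 (xs i) (ys i) \<in> carrier R"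
      "crd B1 (xs i) (ys j) \<in> carrier R" using Ac that \<open>i < L\<close> by auto
    ultimately show ?thesis unfolding P_def V_def by simp
  qed
  obtain H T where H: "H \<subseteq> {..<L}" "finite H" "card H = n" and HT: "\<And>i j. i \<in> H \<Longrightarrow> j \<in> H \<Longrightarrow> i < j \<Longrightarrow> P i j = T"
  proof -
    have "\<exists>H T. H \<subseteq> {..<L} \<and> finite H \<and> card H = n \<and> (\<forall>i\<in>H. \<forall>j\<in>H. i < j \<longrightarrow> P i j = T)"
    proof (rule ramsey_pattern[where V = V])
      show "finite V" unfolding V_def using fin by simp
      have "(\<zero>, \<zero>, \<zero>) \<in> V" unfolding V_def by simp
      then show "V \<noteq> {}" by blast
      show "\<And>i j. i < j \<Longrightarrow> j < L \<Longrightarrow> P i j \<in> V" by (rule PV)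
      show "partn_lst {..<L} (replicate (card V) n) 2" using L unfolding cV n_def s_def .
    qed
    then show ?thesis
    proof (elim exE conjE)
      fix H0 T0 assume A: "H0 \<subseteq> {..<L}" "finite H0" "card H0 = n"
        and B: "\<forall>i\<in>H0. \<forall>j\<in>H0. i < j \<longrightarrow> P i j = T0"
      show ?thesis
      proof (rule that[OF A])
        fix i j assume "i \<in> H0" "j \<in> H0" "i < j"
        then show "P i j = T0" using B by simp
      qed
    qed
  qed
  obtain d b a where T: "T = (d, b, a)" by (cases T) auto
  define H' where "H' = H - {Max H}"
  have Hne: "H \<noteq> {}" using H unfolding n_def by auto
  have MH: "Max H \<in> H" using H Hne by simp
  have fH': "finite H'" and cH': "card H' = k * s + 1" unfolding H'_def using H MH n_def by auto
  obtain g where g: "bij_betw g {..<k * s + 1} H'"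
    and giso: "\<And>t u. t < k * s + 1 \<Longrightarrow> u < k * s + 1 \<Longrightarrow> g t < g u \<longleftrightarrow> t < u"
    using enum_set[OF fH'] unfolding cH' by blast
  have gH: "\<And>t. t < k * s + 1 \<Longrightarrow> g t \<in> H \<and> g t < Max H \<and> g t < L"
  proof -
    fix t assume t: "t < k * s + 1"
    then have "g t \<in> H'" using g bij_betwE by blast
    then have "g t \<in> H" "g t \<noteq> Max H" unfolding H'_def by auto
    moreover have "g t \<le> Max H" using Max_ge[OF H(2)] \<open>g t \<in> H\<close> by blast
    ultimately have "g t < Max H" by linarith
    then show "g t \<in> H \<and> g t < Max H \<and> g t < L" using H \<open>g t \<in> H\<close> by auto
  qed
  have ig: "inj_on g {..<k * s + 1}" using g bij_betw_imp_inj_on by blast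
  have dd: "crd B1 (xs (g t)) (ys (g t)) = d" and bb: "w (g t) = b" if t: "t < k * s + 1" for t
    using HT[of "g t" "Max H"] gH[OF t] MH unfolding T P_def by auto
  have aa: "crd B1 (xs (g t')) (ys (g t)) = a" if "t' < t" "t < k * s + 1" for t t'
  proof -
    have "g t' < g t" using giso that by auto
    then show ?thesis using HT[of "g t'" "g t"] gH that unfolding T P_def by auto
  qed
  have bb2: "crd B1 (xs (g t')) (ys (g t)) = b" if "t < t'" "t' < k * s + 1" for t t'
  proof -
    have "g t < g t'" using giso that by auto
    then have "crd B1 (xs (g t')) (ys (g t)) = w (g t)" using seq gH that by auto
    then show ?thesis using bb that by auto
  qed
  have pat: "crd B1 (xs (g t')) (ys (g t)) = Mx a b d t' t" if "t' < k * s + 1" "t < k * s + 1" for t t'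
    using dd aa bb2 that unfolding Mx_def by (cases "t < t'"; cases "t = t'") auto
  have ks: "1 < k * s + 1" using k0 s0 by simp
  have bd: "b \<noteq> d"
  proof -
    have "crd B1 (xs (g 0)) (ys (g 0)) \<noteq> w (g 0)" using seqn gH[of 0] by simp
    then show ?thesis using dd[of 0] bb[of 0] by simp
  qed
  have abd: "a \<in> carrier R" "b \<in> carrier R" "d \<in> carrier R"
  proof -
    have g01: "g 0 < L" "g 1 < L" using gH[of 0] gH[of 1] ks by auto
    have "crd B1 (xs (g 0)) (ys (g 0)) \<in> carrier R" using Ac g01 by blast
    then show "d \<in> carrier R" using dd[of 0] by simp
    have "crd B1 (xs (g 1)) (ys (g 0)) \<in> carrier R" using Ac g01 by blast
    then show "b \<in> carrier R" using bb2[of 0 1] ks by simp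
    have "crd B1 (xs (g 0)) (ys (g 1)) \<in> carrier R" using Ac g01 by blast
    then show "a \<in> carrier R" using aa[of 0 1] ks by simp
  qed
  have sdef: "s = card (carrier R) * (card (carrier R) - 1)" unfolding s_def q ..
  have gL: "\<And>t. t < k * s + 1 \<Longrightarrow> g t < L" using gH by blast
  have injc: "inj_on (\<lambda>t. zs (g (f t))) {..<k * s}"
    if izs: "inj_on zs {..<L}" and fi: "\<And>t u. t < k * s \<Longrightarrow> u < k * s \<Longrightarrow> f t = f u \<Longrightarrow> t = u"
      and fr: "\<And>t. t < k * s \<Longrightarrow> f t < k * s + 1" for zs f
  proof (rule inj_onI)
    fix t u assume t: "t \<in> {..<k * s}" and u: "u \<in> {..<k * s}" and e: "zs (g (f t)) = zs (g (f u))"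
    have "g (f t) = g (f u)" using inj_onD[OF izs e] gL fr t u by auto
    then have "f t = f u" using inj_onD[OF ig] fr t u by auto
    then show "t = u" using fi t u by auto
  qed
  show ?thesis
  proof (cases "d = \<zero> \<and> a = \<zero>")
    case False
    show ?thesis
    proof (rule pattern_exchange[OF fin B1 B2 sdef s0, where X = "\<lambda>t. xs (g t)" and Y = "\<lambda>t. ys (g t)"
          and a = a and b = b and d = d])
      show "\<And>t. t < k * s \<Longrightarrow> xs (g t) \<in> B1 - B2" using xsB gL by auto
      show "\<And>t. t < k * s \<Longrightarrow> ys (g t) \<in> B2 - B1" using ysB gL by auto
      show "inj_on (\<lambda>t. xs (g t)) {..<k * s}" using injc[OF ixs, of "\<lambda>t. t"] by auto
      show "inj_on (\<lambda>t. ys (g t)) {..<k * s}" using injc[OF iys, of "\<lambda>t. t"] by auto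
      show "a \<in> carrier R" "b \<in> carrier R" "d \<in> carrier R" by (rule abd)+
      show "d \<noteq> \<zero> \<or> d \<noteq> a \<and> d \<noteq> b" using False bd by auto
      show "d \<noteq> a \<or> d \<noteq> b" using bd by auto
      show "\<And>t' t. t' < k * s \<Longrightarrow> t < k * s \<Longrightarrow> crd B1 (xs (g t')) (ys (g t)) = Mx a b d t' t"
        using pat by auto
    qed
  next
    case True
    have b0: "b \<noteq> \<zero>" using True bd by auto
    show ?thesis
    proof (rule pattern_exchange[OF fin B1 B2 sdef s0, where X = "\<lambda>t. xs (g (Suc t))" and Y = "\<lambda>t. ys (g t)"
          and a = "\<zero>" and b = b and d = b])
      show "\<And>t. t < k * s \<Longrightarrow> xs (g (Suc t)) \<in> B1 - B2" using xsB gL by auto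
      show "\<And>t. t < k * s \<Longrightarrow> ys (g t) \<in> B2 - B1" using ysB gL by auto
      show "inj_on (\<lambda>t. xs (g (Suc t))) {..<k * s}" using injc[OF ixs, of Suc] by auto
      show "inj_on (\<lambda>t. ys (g t)) {..<k * s}" using injc[OF iys, of "\<lambda>t. t"] by auto
      show "\<zero> \<in> carrier R" "b \<in> carrier R" "b \<in> carrier R" using abd by auto
      show "b \<noteq> \<zero> \<or> b \<noteq> \<zero> \<and> b \<noteq> b" using b0 by auto
      show "b \<noteq> \<zero> \<or> b \<noteq> b" using b0 by auto
      fix t' t assume t': "t' < k * s" and t: "t < k * s"
      have "crd B1 (xs (g (Suc t'))) (ys (g t)) = Mx a b d (Suc t') t" using pat t' t by auto
      then show "crd B1 (xs (g (Suc t'))) (ys (g t)) = Mx \<zero> b b t' t"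
        using True unfolding Mx_def by auto
    qed
  qed
qed

end

theorem theorem5p14:
  shows "\<exists>f :: nat \<Rightarrow> nat \<Rightarrow> nat.
    \<forall>q k (F :: nat ring) (E :: nat set) indep.
      (\<exists>p n. prime p \<and> n > 0 \<and> q = p ^ n) \<and> k > 0
      \<and> field F \<and> finite (carrier F) \<and> card (carrier F) = q
      \<and> matroid E indep \<and> representable_over F E indep
      \<longrightarrow> weakly_base_orderable E indep (f q k) k"
proof
  define RN where "RN q k = (SOME L :: nat. partn_lst {..<L} (replicate (q ^ 3) (k * (q * (q - 1)) + 2)) (2::nat))"
    for q k :: nat
  show "\<forall>q k (F :: nat ring) (E :: nat set) indep.
      (\<exists>p n. prime p \<and> n > 0 \<and> q = p ^ n) \<and> k > 0
      \<and> field F \<and> finite (carrier F) \<and> card (carrier F) = q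
      \<and> matroid E indep \<and> representable_over F E indep
      \<longrightarrow> weakly_base_orderable E indep ((\<lambda>q k. q ^ RN q k) q k) k"
  proof (intro allI impI)
    fix q k :: nat and F :: "nat ring" and E :: "nat set" and Ind
    assume H: "(\<exists>p n. prime p \<and> n > 0 \<and> q = p ^ n) \<and> k > 0
      \<and> field F \<and> finite (carrier F) \<and> card (carrier F) = q
      \<and> matroid E Ind \<and> representable_over F E Ind"
    then obtain r v where rv: "\<forall>x\<in>E. \<forall>i<r. v x i \<in> carrier F"
        "\<forall>X. Ind X \<longleftrightarrow> X \<subseteq> E \<and> lin_indep_cols F r v X"
      unfolding representable_over_def by blast
    have R: "rep F E Ind r v"
      unfolding rep_def rep_axioms_def using H rv by blast
    have L: "partn_lst {..<RN q k} (replicate (q ^ 3) (k * (q * (q - 1)) + 2)) 2"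
      unfolding RN_def by (rule someI_ex[OF ramsey_full])
    show "weakly_base_orderable E Ind ((\<lambda>q k. q ^ RN q k) q k) k"
      unfolding weakly_base_orderable_def
    proof (intro allI impI)
      fix B1 B2 assume B: "basis E Ind B1 \<and> basis E Ind B2 \<and> (\<lambda>q k. q ^ RN q k) q k \<le> card (B1 - B2)"
      show "k_exchange E Ind k B1 B2"
        by (rule rep.main_rep[OF R, of q k "RN q k"]) (use H L B in auto)
    qed
  qed
qed

end
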